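(* Let $\mathcal A$ be a finite alphabet. A map $\mu:\mathcal S_\infty\to[0,\infty]$ with $\mu(\emptyset)=0$ is $\sigma$-additive (hence a pre-measure) if and only if for all $u\in\mathcal A^*$: $$\mu(C_\infty(u))=\mu(\{u\})+\sum_{a\in\mathcal A}\mu(C_\infty(ua)).$$
   Context: $\mathcal A^*,\mathcal A^\omega$: finite/infinite words; $\mathcal A^\infty=\mathcal A^*\cup\mathcal A^\omega$; $\sqsubseteq$ prefix; $C_\infty(u)=\{v\in\mathcal A^\infty:u\sqsubseteq v\}$; $\mathcal S_\infty=\{\emptyset\}\cup\{\{u\}:u\in\mathcal A^*\}\cup\{C_\infty(u):u\in\mathcal A^*\}$. $\sigma$-additive means: for every sequence of pairwise disjoint $S_n\in\mathcal S_\infty$ with $\bigcup_nS_n\in\mathcal S_\infty$, $\mu(\bigcup_nS_n)=\sum_n\mu(S_n)$. *)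

theory Defs
  imports "HOL-Analysis.Analysis"
begin

datatype 'a infword = Fin "'a list" | Inf "nat \<Rightarrow> 'a"

fun fprefix :: "'a list \<Rightarrow> 'a infword \<Rightarrow> bool" where
  "fprefix u (Fin w) \<longleftrightarrow> (\<exists>z. w = u @ z)"
| "fprefix u (Inf f) \<longleftrightarrow> (\<forall>i < length u. f i = u ! i)"

definition Cinf :: "'a list \<Rightarrow> 'a infword set" where
  "Cinf u = {v. fprefix u v}"

definition Sinf :: "'a infword set set" where
  "Sinf = {{}} \<union> {{Fin u} | u. True} \<union> {Cinf u | u. True}"

end

theory Submission
  imports Defs
begin

lemma Cinf_Fin[simp]: "Fin w \<in> Cinf u \<longleftrightarrow> (\<exists>z. w = u @ z)"
  by (simp add: Cinf_def)

lemma Cinf_Inf[simp]: "Inf f \<in> Cinf u \<longleftrightarrow> (\<forall>i<length u. f i = u ! i)"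
  by (simp add: Cinf_def)

lemma Sinf_cases: "X \<in> Sinf \<longleftrightarrow> X = {} \<or> (\<exists>u. X = {Fin u}) \<or> (\<exists>u. X = Cinf u)"
  by (auto simp: Sinf_def)

lemma Cinf_ne_single: "Cinf u \<noteq> {Fin w}"
proof
  assume h: "Cinf u = {Fin w}"
  have "Fin u \<in> Cinf u" "Fin (u @ [undefined]) \<in> Cinf u" by auto
  then have "Fin u \<in> {Fin w}" "Fin (u @ [undefined]) \<in> {Fin w}" unfolding h by blast+
  then have "u = w" "u @ [undefined] = w" by simp_all
  then show False by simp
qed

lemma Cinf_sub: "Cinf v \<subseteq> Cinf w \<longleftrightarrow> (\<exists>z. v = w @ z)"
proof
  assume "Cinf v \<subseteq> Cinf w"
  moreover have "Fin v \<in> Cinf v" by simp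
  ultimately have "Fin v \<in> Cinf w" by blast
  then show "\<exists>z. v = w @ z" by simp
next
  assume "\<exists>z. v = w @ z"
  then obtain z where z: "v = w @ z" by blast
  show "Cinf v \<subseteq> Cinf w"
  proof
    fix x assume "x \<in> Cinf v"
    then show "x \<in> Cinf w" using z by (cases x) (auto simp: nth_append)
  qed
qed

lemma Cinf_inj: "Cinf v = Cinf w \<Longrightarrow> v = w"
proof -
  assume h: "Cinf v = Cinf w"
  then obtain z where "v = w @ z" using Cinf_sub[THEN iffD1, OF equalityD1[OF h]] by blast
  moreover obtain z' where "w = v @ z'" using Cinf_sub[THEN iffD1, OF equalityD2[OF h]] by blast
  ultimately show "v = w" by auto
qed

lemma Cinf_split: "Cinf u = insert (Fin u) (\<Union>a. Cinf (u @ [a]))"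
proof (intro equalityI subsetI)
  fix x assume x: "x \<in> Cinf u"
  show "x \<in> insert (Fin u) (\<Union>a. Cinf (u @ [a]))"
  proof (cases x)
    case (Fin w)
    then obtain z where z: "w = u @ z" using x by auto
    show ?thesis
    proof (cases z)
      case Nil then show ?thesis using Fin z by simp
    next
      case (Cons a z') then show ?thesis using Fin z by auto
    qed
  next
    case (Inf f)
    then have "x \<in> Cinf (u @ [f (length u)])" using x
      by (auto simp: nth_append less_Suc_eq)
    then show ?thesis by blast
  qed
next
  fix x assume "x \<in> insert (Fin u) (\<Union>a. Cinf (u @ [a]))"
  moreover have "Cinf (u @ [a]) \<subseteq> Cinf u" for a by (rule Cinf_sub[THEN iffD2]) simp
  ultimately show "x \<in> Cinf u" by auto
qed

lemma Cinf_disj: "a \<noteq> b \<Longrightarrow> Cinf (u @ [a]) \<inter> Cinf (u @ [b]) = {}"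
proof (rule ccontr)
  assume ab: "a \<noteq> b" and "Cinf (u @ [a]) \<inter> Cinf (u @ [b]) \<noteq> {}"
  then obtain x where x: "x \<in> Cinf (u @ [a])" "x \<in> Cinf (u @ [b])" by blast
  show False
  proof (cases x)
    case (Fin w) then show False using x ab by auto
  next
    case (Inf f)
    then have "f (length u) = a" "f (length u) = b" using x
      by (auto dest!: spec[of _ "length u"])
    then show False using ab by simp
  qed
qed

lemma Fin_notin: "Fin u \<notin> Cinf (u @ [a])"
  by simp

lemma top_piece:
  assumes "Cinf u \<in> P" "disjoint P" "{} \<notin> P" "\<Union>P = Cinf u"
  shows "P = {Cinf u}"
proof -
  have "X = Cinf u" if X: "X \<in> P" for X
  proof (rule ccontr)
    assume ne: "X \<noteq> Cinf u"
    then have "disjnt X (Cinf u)" using assms(1,2) X unfolding pairwise_def by blast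
    moreover have "X \<subseteq> Cinf u" using X assms(4) by blast
    moreover have "X \<noteq> {}" using X assms(3) by blast
    ultimately show False unfolding disjnt_def by blast
  qed
  then show ?thesis using assms(1) by blast
qed

lemma Fin_u_piece:
  assumes "P \<subseteq> Sinf" "Cinf u \<notin> P" "\<Union>P = Cinf u"
  shows "{Fin u} \<in> P"
proof -
  have "Fin u \<in> \<Union>P" using assms(3) by simp
  then obtain X where X: "X \<in> P" "Fin u \<in> X" by blast
  have sub: "X \<subseteq> Cinf u" using X assms(3) by blast
  have "X \<in> Sinf" using X assms(1) by blast
  then consider "X = {}" | w where "X = {Fin w}" | w where "X = Cinf w"
    unfolding Sinf_cases by blast
  then show ?thesis
  proof cases
    case 1 then show ?thesis using X by simp
  next
    case (2 w) then show ?thesis using X by simp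
  next
    case (3 w)
    then obtain z where "w = u @ z" using sub Cinf_sub by blast
    moreover obtain z' where "u = w @ z'" using X 3 by auto
    ultimately have "w = u" by simp
    then show ?thesis using 3 X assms(2) by simp
  qed
qed

lemma partition_additive:
  fixes \<mu> :: "('a::finite) infword set \<Rightarrow> ennreal"
  assumes loc: "\<forall>u. \<mu> (Cinf u) = \<mu> {Fin u} + (\<Sum>a\<in>UNIV. \<mu> (Cinf (u @ [a])))"
  shows "finite P \<Longrightarrow> P \<subseteq> Sinf \<Longrightarrow> {} \<notin> P \<Longrightarrow> disjoint P \<Longrightarrow> \<Union>P = Cinf u \<Longrightarrow>
    (\<forall>X\<in>P. \<forall>w. (X = Cinf w \<or> X = {Fin w}) \<longrightarrow> length w \<le> length u + d) \<Longrightarrow>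
    \<mu> (Cinf u) = (\<Sum>X\<in>P. \<mu> X)"
proof (induction d arbitrary: u P)
  case 0
  show ?case
  proof (cases "Cinf u \<in> P")
    case True
    have "P = {Cinf u}" using top_piece[OF True] "0.prems"(3,4,5) by blast
    then show ?thesis by simp
  next
    case False
    have "X = {Fin u}" if X: "X \<in> P" for X
    proof -
      have sub: "X \<subseteq> Cinf u" using X 0 by blast
      have "X \<in> Sinf" using X 0 by blast
      then consider "X = {}" | w where "X = {Fin w}" | w where "X = Cinf w"
        unfolding Sinf_cases by blast
      then show ?thesis
      proof cases
        case 1 then show ?thesis using X 0 by simp
      next
        case (2 w)
        then obtain z where "w = u @ z" using sub by auto
        moreover have "length w \<le> length u" using 0(6) X 2 by auto
        ultimately show ?thesis using 2 by simp
      next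
        case (3 w)
        then obtain z where "w = u @ z" using sub Cinf_sub by blast
        moreover have "length w \<le> length u" using 0(6) X 3 by auto
        ultimately show ?thesis using 3 X False by simp
      qed
    qed
    then have "\<Union>P \<subseteq> {Fin u}" by blast
    moreover have "Fin (u @ [undefined]) \<in> Cinf u" by simp
    ultimately show ?thesis using 0(5) by auto
  qed
next
  case (Suc d)
  show ?case
  proof (cases "Cinf u \<in> P")
    case True
    have "P = {Cinf u}" using top_piece[OF True] Suc.prems(3,4,5) by blast
    then show ?thesis by simp
  next
    case False
    have Fu: "{Fin u} \<in> P" using Fin_u_piece[OF _ False] Suc by blast
    define Pa where "Pa a = {X\<in>P. X \<subseteq> Cinf (u @ [a])}" for a
    have cls: "\<exists>a. X \<in> Pa a" if X: "X \<in> P" "X \<noteq> {Fin u}" for X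
    proof -
      have sub: "X \<subseteq> Cinf u" using X Suc by blast
      have "X \<in> Sinf" using X Suc by blast
      then consider "X = {}" | w where "X = {Fin w}" | w where "X = Cinf w"
        unfolding Sinf_cases by blast
      then show ?thesis
      proof cases
        case 1 then show ?thesis using X Suc by simp
      next
        case (2 w)
        then obtain z where z: "w = u @ z" using sub by auto
        then show ?thesis
        proof (cases z)
          case Nil then show ?thesis using X 2 z by simp
        next
          case (Cons a z')
          then show ?thesis using X 2 z unfolding Pa_def by auto
        qed
      next
        case (3 w)
        then obtain z where z: "w = u @ z" using sub Cinf_sub by blast
        then show ?thesis
        proof (cases z)
          case Nil then show ?thesis using X 3 z False by simp
        next
          case (Cons a z')
          then have "Cinf w \<subseteq> Cinf (u @ [a])" using z by (intro Cinf_sub[THEN iffD2]) simp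
          then show ?thesis using X 3 unfolding Pa_def by auto
        qed
      qed
    qed
    have Peq: "P = insert {Fin u} (\<Union>a. Pa a)"
      using cls Fu unfolding Pa_def by blast
    have notin: "{Fin u} \<notin> (\<Union>a. Pa a)" unfolding Pa_def by auto
    have IH: "\<mu> (Cinf (u @ [a])) = (\<Sum>X\<in>Pa a. \<mu> X)" for a
    proof (rule Suc.IH)
      show "finite (Pa a)" using Suc(2) unfolding Pa_def by simp
      show "Pa a \<subseteq> Sinf" using Suc(3) unfolding Pa_def by blast
      show "{} \<notin> Pa a" using Suc(4) unfolding Pa_def by blast
      show "disjoint (Pa a)" using Suc(5) unfolding Pa_def by (rule pairwise_subset) blast
      show "\<Union>(Pa a) = Cinf (u @ [a])"
      proof (intro equalityI subsetI)
        fix x assume "x \<in> \<Union>(Pa a)" then show "x \<in> Cinf (u @ [a])" unfolding Pa_def by blast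
      next
        fix x assume xa: "x \<in> Cinf (u @ [a])"
        moreover have "Cinf (u @ [a]) \<subseteq> Cinf u" by (rule Cinf_sub[THEN iffD2]) simp
        ultimately have "x \<in> Cinf u" by blast
        then obtain X where X: "X \<in> P" "x \<in> X" using Suc(6) by blast
        have "x \<noteq> Fin u" using xa Fin_notin by metis
        then have "X \<noteq> {Fin u}" using X by auto
        then obtain b where b: "X \<in> Pa b" using cls X by blast
        then have "x \<in> Cinf (u @ [b])" using X unfolding Pa_def by blast
        then have "a = b" using xa Cinf_disj[of a b u] by blast
        then show "x \<in> \<Union>(Pa a)" using b X by blast
      qed
      show "\<forall>X\<in>Pa a. \<forall>w. (X = Cinf w \<or> X = {Fin w}) \<longrightarrow> length w \<le> length (u @ [a]) + d"
      proof (intro ballI allI impI)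
        fix X w assume X: "X \<in> Pa a" and w: "X = Cinf w \<or> X = {Fin w}"
        have "Fin w \<in> X" using w by (elim disjE) simp_all
        then have "Fin w \<in> Cinf (u @ [a])" using X unfolding Pa_def by blast
        then obtain z where "w = (u @ [a]) @ z" by auto
        then have "length w \<ge> length (u @ [a])" by simp
        moreover have XP: "X \<in> P" using X unfolding Pa_def by blast
        moreover have "length w \<le> length u + Suc d" using Suc(7) XP w by blast
        ultimately show "length w \<le> length (u @ [a]) + d" by simp
      qed
    qed
    have fin: "finite (Pa a)" for a using Suc(2) unfolding Pa_def by simp
    have dj: "Pa a \<inter> Pa b = {}" if "a \<noteq> b" for a b
    proof -
      have "X = {}" if "X \<in> Pa a" "X \<in> Pa b" for X
        using that Cinf_disj[OF \<open>a \<noteq> b\<close>, of u] unfolding Pa_def by blast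
      then show ?thesis using Suc(4) unfolding Pa_def by blast
    qed
    have "(\<Sum>X\<in>P. \<mu> X) = \<mu> {Fin u} + (\<Sum>X\<in>(\<Union>a. Pa a). \<mu> X)"
      unfolding Peq using notin fin by (subst sum.insert) auto
    also have "(\<Sum>X\<in>(\<Union>a. Pa a). \<mu> X) = (\<Sum>a\<in>UNIV. \<Sum>X\<in>Pa a. \<mu> X)"
      by (rule sum.UNION_disjoint) (auto simp: fin dj)
    also have "\<dots> = (\<Sum>a\<in>UNIV. \<mu> (Cinf (u @ [a])))" using IH by simp
    finally show ?thesis using loc[rule_format, of u] by simp
  qed
qed


lemma Cinf_nonempty: "Cinf w \<noteq> {}"
proof -
  have "Fin w \<in> Cinf w" by simp
  then show ?thesis by blast
qed

lemma depth_bound: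
  "finite P \<Longrightarrow> P \<subseteq> Sinf \<Longrightarrow>
    \<exists>d. \<forall>X\<in>P. \<forall>w. (X = Cinf w \<or> X = {Fin w}) \<longrightarrow> length w \<le> d"
proof (induction P rule: finite_induct)
  case empty show ?case by simp
next
  case (insert Y P)
  then obtain d where d: "\<forall>X\<in>P. \<forall>w. (X = Cinf w \<or> X = {Fin w}) \<longrightarrow> length w \<le> d" by blast
  have "Y \<in> Sinf" using insert by blast
  then consider "Y = {}" | w0 where "Y = {Fin w0}" | w0 where "Y = Cinf w0"
    unfolding Sinf_cases by blast
  then obtain e where e: "\<forall>w. (Y = Cinf w \<or> Y = {Fin w}) \<longrightarrow> length w \<le> e"
  proof cases
    case 1
    have "\<forall>w. (Y = Cinf w \<or> Y = {Fin w}) \<longrightarrow> length w \<le> 0"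
      using 1 Cinf_nonempty by (metis insert_not_empty)
    then show ?thesis using that by blast
  next
    case (2 w0)
    have "\<forall>w. (Y = Cinf w \<or> Y = {Fin w}) \<longrightarrow> length w \<le> length w0"
      using 2 Cinf_ne_single by auto
    then show ?thesis using that by blast
  next
    case (3 w0)
    have "\<forall>w. (Y = Cinf w \<or> Y = {Fin w}) \<longrightarrow> length w \<le> length w0"
    proof (intro allI impI)
      fix w assume "Y = Cinf w \<or> Y = {Fin w}"
      then have "Cinf w0 = Cinf w" using 3 Cinf_ne_single by metis
      then have "w0 = w" by (rule Cinf_inj)
      then show "length w \<le> length w0" by simp
    qed
    then show ?thesis using that by blast
  qed
  have "\<forall>X\<in>insert Y P. \<forall>w. (X = Cinf w \<or> X = {Fin w}) \<longrightarrow> length w \<le> max d e"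
    using d e by fastforce
  then show ?case by blast
qed

lemma fin_additive:
  fixes \<mu> :: "('a::finite) infword set \<Rightarrow> ennreal"
  assumes mu0: "\<mu> {} = 0"
    and loc: "\<forall>u. \<mu> (Cinf u) = \<mu> {Fin u} + (\<Sum>a\<in>UNIV. \<mu> (Cinf (u @ [a])))"
    and fin: "finite P" and PS: "P \<subseteq> Sinf" and ne: "{} \<notin> P" and dj: "disjoint P"
    and un: "\<Union>P \<in> Sinf"
  shows "\<mu> (\<Union>P) = (\<Sum>X\<in>P. \<mu> X)"
proof -
  from un consider "\<Union>P = {}" | u where "\<Union>P = {Fin u}" | u where "\<Union>P = Cinf u"
    unfolding Sinf_cases by blast
  then show ?thesis
  proof cases
    case 1
    have "P = {}"
    proof (rule ccontr)
      assume "P \<noteq> {}"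
      then obtain X where X: "X \<in> P" by blast
      then have "X \<subseteq> \<Union>P" by (rule Union_upper)
      then have "X = {}" unfolding 1 by (rule subset_empty[THEN iffD1])
      then show False using X ne by simp
    qed
    then show ?thesis using mu0 by simp
  next
    case (2 u)
    have "X = {Fin u}" if "X \<in> P" for X
    proof -
      have "X \<subseteq> \<Union>P" using that by (rule Union_upper)
      then have "X \<subseteq> {Fin u}" unfolding 2 .
      moreover have "X \<noteq> {}" using that ne by metis
      ultimately show ?thesis using subset_singletonD by metis
    qed
    then have "P \<subseteq> {{Fin u}}" by blast
    moreover have "P \<noteq> {}" using 2 by (metis Union_empty insert_not_empty)
    ultimately have "P = {{Fin u}}" using subset_singletonD by metis
    then show ?thesis by simp
  next
    case (3 u)
    obtain d where d: "\<forall>X\<in>P. \<forall>w. (X = Cinf w \<or> X = {Fin w}) \<longrightarrow> length w \<le> d"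
      using depth_bound[OF fin PS] by blast
    have d': "\<forall>X\<in>P. \<forall>w. (X = Cinf w \<or> X = {Fin w}) \<longrightarrow> length w \<le> length u + d"
      using d trans_le_add2 by blast
    show ?thesis unfolding 3
      by (rule partition_additive[OF loc fin PS ne dj 3 d'])
  qed
qed

fun kpath :: "('a list \<Rightarrow> bool) \<Rightarrow> 'a list \<Rightarrow> nat \<Rightarrow> 'a list" where
  "kpath B u 0 = u"
| "kpath B u (Suc k) = kpath B u k @ [SOME a. B (kpath B u k @ [a])]"

lemma fin_cover:
  fixes A :: "nat \<Rightarrow> 'b set"
  shows "finite G \<Longrightarrow> G \<subseteq> (\<Union>i. A i) \<Longrightarrow> \<exists>M. G \<subseteq> (\<Union>n<M. A n)"
proof (induction G rule: finite_induct)
  case empty show ?case by simp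
next
  case (insert x G)
  then obtain M where M: "G \<subseteq> (\<Union>n<M. A n)" by blast
  obtain n where n: "x \<in> A n" using insert by blast
  have s1: "A n \<subseteq> (\<Union>m<max M (Suc n). A m)" by (rule UN_upper) simp
  have s2: "(\<Union>m<M. A m) \<subseteq> (\<Union>m<max M (Suc n). A m)" by (rule UN_mono) auto
  have "insert x G \<subseteq> (\<Union>m<max M (Suc n). A m)" using M n s1 s2 by blast
  then show ?case by blast
qed

lemma neg1: "\<not> (\<exists>a. (\<forall>N. \<exists>f. P a f \<and> (\<forall>n<N. \<not> Q n f))) \<Longrightarrow> \<forall>a. \<exists>N::nat. \<forall>f. P a f \<longrightarrow> (\<exists>n<N. Q n f)"
  by simp

lemma neg2: "\<not> (\<exists>N. \<forall>f. P f \<longrightarrow> (\<exists>n<N. Q n f)) \<Longrightarrow> (\<forall>N::nat. \<exists>f. P f \<and> (\<forall>n<N. \<not> Q n f))"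
  by simp

lemma infA_lemma: "X \<in> Sinf \<Longrightarrow> Inf f \<in> X \<Longrightarrow> \<exists>v. X = Cinf v"
  unfolding Sinf_cases by auto

lemma compact_cover:
  fixes A :: "nat \<Rightarrow> ('a::finite) infword set"
  assumes rng: "range A \<subseteq> Sinf" and un: "(\<Union>i. A i) = Cinf u"
  shows "\<exists>N. \<forall>f. Inf f \<in> Cinf u \<longrightarrow> (\<exists>n<N. Inf f \<in> A n)"
proof (rule ccontr)
  assume nK: "\<not> (\<exists>N. \<forall>f. Inf f \<in> Cinf u \<longrightarrow> (\<exists>n<N. Inf f \<in> A n))"
  define bad where "bad w \<longleftrightarrow> (\<forall>N. \<exists>f. Inf f \<in> Cinf w \<and> (\<forall>n<N. Inf f \<notin> A n))" for w
  have bu: "bad u" unfolding bad_def by (rule neg2[OF nK])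
  have step: "\<exists>a. bad (w @ [a])" if bw: "bad w" for w
  proof (rule ccontr)
    assume "\<not> (\<exists>a. bad (w @ [a]))"
    then have "\<forall>a. \<exists>N. \<forall>f. Inf f \<in> Cinf (w @ [a]) \<longrightarrow> (\<exists>n<N. Inf f \<in> A n)"
      unfolding bad_def by (rule neg1)
    then have "\<exists>Na. \<forall>a. \<forall>f. Inf f \<in> Cinf (w @ [a]) \<longrightarrow> (\<exists>n<Na a. Inf f \<in> A n)"
      by (rule choice)
    then obtain Na where Na0: "\<forall>a. \<forall>f. Inf f \<in> Cinf (w @ [a]) \<longrightarrow> (\<exists>n<Na a. Inf f \<in> A n)"
      by (rule exE)
    have Na: "\<exists>n<Na a. Inf f \<in> A n" if "Inf f \<in> Cinf (w @ [a])" for a f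
      using Na0 that by blast
    define N where "N = Max (range Na)"
    obtain f where f: "Inf f \<in> Cinf w" "\<forall>n<N. Inf f \<notin> A n"
      using bw unfolding bad_def by blast
    have "Inf f \<in> Cinf (w @ [f (length w)])" using f(1)
      by (auto simp: nth_append less_Suc_eq)
    then obtain n where n: "n < Na (f (length w))" "Inf f \<in> A n" using Na by blast
    have "Na (f (length w)) \<le> N" unfolding N_def
      by (rule Max_ge[OF finite_imageI[OF finite_class.finite_UNIV]]) simp
    then show False using n f(2) by auto
  qed
  define W where "W = kpath bad u"
  have W0: "W 0 = u" unfolding W_def by simp
  have WS: "W (Suc k) = W k @ [SOME a. bad (W k @ [a])]" for k unfolding W_def by simp
  have Wbad: "bad (W k)" for k
  proof (induction k)
    case 0 show ?case using bu W0 by simp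
  next
    case (Suc k) show ?case unfolding WS using someI_ex[OF step[OF Suc]] .
  qed
  have Wlen: "length (W k) = length u + k" for k by (induction k) (simp_all add: W0 WS)
  have Wpre: "\<exists>z. W (k + j) = W k @ z" for k j
  proof (induction j)
    case 0 show ?case by simp
  next
    case (Suc j)
    then obtain z where "W (k + j) = W k @ z" by blast
    then have "W (k + Suc j) = W k @ (z @ [SOME a. bad (W (k + j) @ [a])])"
      by (simp add: WS)
    then show ?case by blast
  qed
  define g where "g i = W (Suc i) ! i" for i
  have gW: "g i = W k ! i" if "i < length (W k)" for i k
  proof -
    obtain z1 where z1: "W (k + Suc i) = W k @ z1" using Wpre by blast
    obtain z2 where z2: "W (Suc i + k) = W (Suc i) @ z2" using Wpre by blast
    have i: "i < length (W (Suc i))" using Wlen by simp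
    have "W (Suc i) ! i = W (k + Suc i) ! i" using z2 i by (simp add: nth_append add.commute)
    also have "\<dots> = W k ! i" using z1 that by (simp add: nth_append)
    finally show ?thesis unfolding g_def .
  qed
  have "Inf g \<in> Cinf u" using gW[of _ 0] W0 by simp
  then have "Inf g \<in> (\<Union>i. A i)" unfolding un .
  then obtain n where n: "Inf g \<in> A n" by (rule UN_E) simp
  then obtain v where v: "A n = Cinf v" using infA_lemma rng by blast
  obtain f where f: "Inf f \<in> Cinf (W (length v))" "\<forall>m<Suc n. Inf f \<notin> A m"
    using Wbad unfolding bad_def by blast
  have "Inf f \<in> Cinf v"
  proof -
    have "f i = v ! i" if "i < length v" for i
    proof -
      have i: "i < length (W (length v))" using that Wlen by simp
      have "f i = W (length v) ! i" using f(1) i by simp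
      also have "\<dots> = g i" using gW[OF i] by simp
      also have "\<dots> = v ! i" using n v that by simp
      finally show ?thesis .
    qed
    then show ?thesis by simp
  qed
  then show False using f(2) v by auto
qed

lemma cover:
  fixes A :: "nat \<Rightarrow> ('a::finite) infword set"
  assumes rng: "range A \<subseteq> Sinf" and un: "(\<Union>i. A i) = Cinf u"
  shows "\<exists>M. Cinf u \<subseteq> (\<Union>n<M. A n)"
proof -
  have infA: "\<exists>v. A n = Cinf v" if "Inf f \<in> A n" for f n
  proof -
    have "A n \<in> Sinf" using rng by blast
    then consider "A n = {}" | w where "A n = {Fin w}" | w where "A n = Cinf w"
      unfolding Sinf_cases by blast
    then show ?thesis using that by cases auto
  qed
  have K1: "\<exists>N. \<forall>f. Inf f \<in> Cinf u \<longrightarrow> (\<exists>n<N. Inf f \<in> A n)"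
    by (rule compact_cover[OF rng un])
  then obtain N where N: "\<And>f. Inf f \<in> Cinf u \<Longrightarrow> \<exists>n<N. Inf f \<in> A n" by blast
  have "\<exists>L. \<forall>n<N. \<forall>w. A n = Cinf w \<longrightarrow> length w \<le> L"
  proof (induction N)
    case 0 then show ?case by simp
  next
    case (Suc N)
    then obtain L where L: "\<forall>n<N. \<forall>w. A n = Cinf w \<longrightarrow> length w \<le> L" by blast
    show ?case
    proof (cases "\<exists>w. A N = Cinf w")
      case True
      then obtain w0 where w0: "A N = Cinf w0" by blast
      have "\<forall>n<Suc N. \<forall>w. A n = Cinf w \<longrightarrow> length w \<le> max L (length w0)"
      proof (intro allI impI)
        fix n w assume n: "n < Suc N" and w: "A n = Cinf w"
        show "length w \<le> max L (length w0)"
        proof (cases "n = N")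
          case True
          then have "w = w0" using w w0 Cinf_inj by metis
          then show ?thesis by simp
        next
          case False
          then have "n < N" using n by simp
          then have "length w \<le> L" using L w by blast
          then show ?thesis by simp
        qed
      qed
      then show ?thesis by blast
    next
      case False
      then have "\<forall>n<Suc N. \<forall>w. A n = Cinf w \<longrightarrow> length w \<le> L" using L less_Suc_eq by auto
      then show ?thesis by blast
    qed
  qed
  then obtain L where L: "\<And>n w. n < N \<Longrightarrow> A n = Cinf w \<Longrightarrow> length w \<le> L" by blast
  have longw: "\<exists>n<N. Fin w \<in> A n" if wu: "Fin w \<in> Cinf u" and wL: "L \<le> length w" for w
  proof -
    define f where "f i = (if i < length w then w ! i else undefined)" for i
    obtain z where z: "w = u @ z" using wu by auto
    have "Inf f \<in> Cinf u" using z by (auto simp: f_def nth_append)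
    then obtain n where n: "n < N" "Inf f \<in> A n" using N by blast
    then obtain v where v: "A n = Cinf v" using infA by blast
    have lv: "length v \<le> length w" using L[OF n(1) v] wL by simp
    have fv: "\<forall>i<length v. f i = v ! i" using n(2) v by simp
    have "take (length v) w = v"
    proof (rule nth_equalityI)
      show "length (take (length v) w) = length v" using lv by simp
      fix i assume "i < length (take (length v) w)"
      then have i: "i < length v" "i < length w" using lv by auto
      have "f i = v ! i" using fv i(1) by blast
      then show "take (length v) w ! i = v ! i" using i by (simp add: f_def)
    qed
    then have "w = v @ drop (length v) w" by (metis append_take_drop_id)
    then have "Fin w \<in> Cinf v" by (metis Cinf_Fin)
    then show ?thesis using n v by blast
  qed
  define G where "G = {x \<in> Cinf u. \<exists>w. x = Fin w \<and> length w < L}"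
  have "G \<subseteq> Fin ` {w. set w \<subseteq> UNIV \<and> length w \<le> L}" unfolding G_def by auto
  moreover have "finite (Fin ` {w. set w \<subseteq> (UNIV::'a set) \<and> length w \<le> L})"
    by (intro finite_imageI finite_lists_length_le) simp
  ultimately have finG: "finite G" by (rule finite_subset)
  have "G \<subseteq> Cinf u" unfolding G_def by (rule Collect_subset)
  then have "G \<subseteq> (\<Union>i. A i)" unfolding un .
  then obtain M' where M': "G \<subseteq> (\<Union>n<M'. A n)" using fin_cover[OF finG] by blast
  have "Cinf u \<subseteq> (\<Union>n<max N M'. A n)"
  proof
    fix x assume x: "x \<in> Cinf u"
    show "x \<in> (\<Union>n<max N M'. A n)"
    proof (cases x)
      case (Inf f)
      then obtain n where "n < N" "x \<in> A n" using N x by blast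
      then show ?thesis by fastforce
    next
      case (Fin w)
      show ?thesis
      proof (cases "length w < L")
        case True
        then have "x \<in> G" using x Fin unfolding G_def by blast
        then obtain n where "n < M'" "x \<in> A n" using M' by blast
        then show ?thesis by fastforce
      next
        case False
        then obtain n where "n < N" "x \<in> A n" using longw[of w] x Fin by auto
        then show ?thesis by fastforce
      qed
    qed
  qed
  then show ?thesis by blast
qed

lemma ev_empty:
  fixes A :: "nat \<Rightarrow> ('a::finite) infword set"
  assumes rng: "range A \<subseteq> Sinf" and dj: "disjoint_family A" and un: "(\<Union>i. A i) \<in> Sinf"
  shows "\<exists>M. \<forall>n\<ge>M. A n = {}"
proof -
  from un consider "(\<Union>i. A i) = {}" | u where "(\<Union>i. A i) = {Fin u}"
    | u where "(\<Union>i. A i) = Cinf u"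
    unfolding Sinf_cases by blast
  then show ?thesis
  proof cases
    case 1 then show ?thesis by auto
  next
    case (2 u)
    show ?thesis
    proof (cases "\<exists>n0. A n0 \<noteq> {}")
      case False then show ?thesis by auto
    next
      case True
      then obtain n0 where n0: "A n0 \<noteq> {}" by blast
      have "A n = {}" if "n \<ge> Suc n0" for n
      proof -
        have "A n \<inter> A n0 = {}" using dj that unfolding disjoint_family_on_def by auto
        moreover have "A n \<subseteq> (\<Union>i. A i)" "A n0 \<subseteq> (\<Union>i. A i)" by blast+
        then have "A n \<subseteq> {Fin u}" "A n0 \<subseteq> {Fin u}" unfolding 2 .
        ultimately show ?thesis using n0 by blast
      qed
      then show ?thesis by blast
    qed
  next
    case (3 u)
    obtain M where M: "Cinf u \<subseteq> (\<Union>n<M. A n)" using cover[OF rng 3] by blast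
    have "A n = {}" if nM: "n \<ge> M" for n
    proof -
      have "A n \<inter> A m = {}" if "m < M" for m
        using dj nM that unfolding disjoint_family_on_def by auto
      moreover have "A n \<subseteq> (\<Union>i. A i)" by blast
      then have "A n \<subseteq> Cinf u" unfolding 3 .
      ultimately show ?thesis using M by blast
    qed
    then show ?thesis by blast
  qed
qed

lemma forward_dir:
  fixes \<mu> :: "('a::finite) infword set \<Rightarrow> ennreal"
  assumes "\<mu> {} = 0" and ca: "countably_additive Sinf \<mu>"
  shows "\<forall>u. \<mu> (Cinf u) = \<mu> {Fin u} + (\<Sum>a\<in>UNIV. \<mu> (Cinf (u @ [a])))"
proof
  fix u :: "'a list"
  obtain xs where xs: "set xs = (UNIV :: 'a set)" "distinct xs"
    using finite_distinct_list[OF finite_class.finite_UNIV] by blast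
  define A where "A n = (if n = 0 then {Fin u} else if n - 1 < length xs
    then Cinf (u @ [xs ! (n - 1)]) else {})" for n
  have rng: "range A \<subseteq> Sinf" unfolding A_def Sinf_def by auto
  have subu: "Cinf (u @ [a]) \<subseteq> Cinf u" for a by (rule Cinf_sub[THEN iffD2]) simp
  have un: "(\<Union>n. A n) = Cinf u"
  proof
    show "(\<Union>n. A n) \<subseteq> Cinf u" unfolding A_def using subu by auto
    show "Cinf u \<subseteq> (\<Union>n. A n)"
    proof
      fix x assume "x \<in> Cinf u"
      then have "x \<in> insert (Fin u) (\<Union>a. Cinf (u @ [a]))" unfolding Cinf_split[of u] .
      then have "x = Fin u \<or> (\<exists>a. x \<in> Cinf (u @ [a]))" by blast
      then show "x \<in> (\<Union>n. A n)"
      proof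
        assume "x = Fin u"
        then have "x \<in> A 0" unfolding A_def by simp
        then show ?thesis by blast
      next
        assume "\<exists>a. x \<in> Cinf (u @ [a])"
        then obtain a where a: "x \<in> Cinf (u @ [a])" by blast
        have "a \<in> set xs" using xs by simp
        then obtain i where i: "i < length xs" "xs ! i = a" by (metis in_set_conv_nth)
        then have "x \<in> A (Suc i)" using a unfolding A_def by simp
        then show ?thesis by blast
      qed
    qed
  qed
  have dj: "disjoint_family A"
    unfolding disjoint_family_on_def
  proof (intro ballI impI)
    fix m n :: nat assume mn: "m \<noteq> n"
    show "A m \<inter> A n = {}"
    proof (cases "m = 0 \<or> n = 0")
      case True
      then show ?thesis using mn unfolding A_def by auto
    next
      case False
      note nz = False
      show ?thesis
      proof (cases "m - 1 < length xs \<and> n - 1 < length xs")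
        case True
        then have "xs ! (m - 1) \<noteq> xs ! (n - 1)" using False mn xs(2)
          by (simp add: nth_eq_iff_index_eq) linarith
        then show ?thesis using False True Cinf_disj unfolding A_def by simp
      next
        case False
        then have "\<not> m - 1 < length xs \<or> \<not> n - 1 < length xs" by simp
        then show ?thesis using nz by (elim disjE) (simp_all add: A_def)
      qed
    qed
  qed
  have "Cinf u \<in> Sinf" unfolding Sinf_def by blast
  then have inS: "(\<Union>n. A n) \<in> Sinf" unfolding un .
  have "(\<Sum>n. \<mu> (A n)) = \<mu> (\<Union>n. A n)"
    using ca[unfolded countably_additive_def, rule_format, OF rng dj inS] .
  then have "(\<Sum>n. \<mu> (A n)) = \<mu> (Cinf u)" unfolding un .
  moreover have "(\<Sum>n. \<mu> (A n)) = (\<Sum>n<Suc (length xs). \<mu> (A n))"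
    by (rule suminf_finite) (auto simp: A_def assms)
  moreover have "(\<Sum>n<Suc (length xs). \<mu> (A n)) = \<mu> {Fin u} + (\<Sum>i<length xs. \<mu> (Cinf (u @ [xs ! i])))"
    by (subst sum.lessThan_Suc_shift) (simp add: A_def)
  moreover have "(\<Sum>i<length xs. \<mu> (Cinf (u @ [xs ! i]))) = (\<Sum>a\<in>UNIV. \<mu> (Cinf (u @ [a])))"
  proof -
    have "(\<Sum>a\<in>UNIV. \<mu> (Cinf (u @ [a]))) = sum_list (map (\<lambda>a. \<mu> (Cinf (u @ [a]))) xs)"
      using sum.distinct_set_conv_list[OF xs(2)] xs(1) by metis
    also have "\<dots> = (\<Sum>i<length xs. \<mu> (Cinf (u @ [xs ! i])))"
      by (simp add: sum_list_sum_nth atLeast0LessThan)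
    finally show ?thesis by simp
  qed
  ultimately show "\<mu> (Cinf u) = \<mu> {Fin u} + (\<Sum>a\<in>UNIV. \<mu> (Cinf (u @ [a])))" by simp
qed

lemma backward_dir:
  fixes \<mu> :: "('a::finite) infword set \<Rightarrow> ennreal"
  assumes "\<mu> {} = 0" and loc: "\<forall>u. \<mu> (Cinf u) = \<mu> {Fin u} + (\<Sum>a\<in>UNIV. \<mu> (Cinf (u @ [a])))"
  shows "countably_additive Sinf \<mu>"
  unfolding countably_additive_def
proof (intro allI impI)
  fix A :: "nat \<Rightarrow> 'a infword set"
  assume rng: "range A \<subseteq> Sinf" and dj: "disjoint_family A" and un: "(\<Union>i. A i) \<in> Sinf"
  obtain M where M: "\<And>n. n \<ge> M \<Longrightarrow> A n = {}" using ev_empty[OF rng dj un] by blast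
  have UnEq: "\<Union>(A ` {..<M} - {{}}) = (\<Union>i. A i)"
  proof
    show "\<Union>(A ` {..<M} - {{}}) \<subseteq> (\<Union>i. A i)" by blast
    show "(\<Union>i. A i) \<subseteq> \<Union>(A ` {..<M} - {{}})"
    proof
      fix x assume "x \<in> (\<Union>i. A i)"
      then obtain i where i: "x \<in> A i" by blast
      have "\<not> M \<le> i" using M i by (metis empty_iff)
      then have "i \<in> {..<M}" by simp
      moreover have "A i \<noteq> {}" using i by blast
      ultimately have "A i \<in> A ` {..<M} - {{}}" by blast
      then show "x \<in> \<Union>(A ` {..<M} - {{}})" using i by blast
    qed
  qed
  have "(\<Sum>n. \<mu> (A n)) = (\<Sum>n<M. \<mu> (A n))"
    by (rule suminf_finite) (auto simp: M assms(1))
  also have "\<dots> = (\<Sum>X\<in>A ` {..<M}. \<mu> X)"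
  proof (rule sum.reindex_nontrivial[symmetric, unfolded comp_def])
    fix x y assume "x \<noteq> y" "A x = A y"
    then have "A x \<inter> A y = {}" using dj unfolding disjoint_family_on_def by blast
    then have "A x = {}" using \<open>A x = A y\<close> by simp
    then show "\<mu> (A x) = 0" using assms(1) by simp
  qed simp
  also have "\<dots> = (\<Sum>X\<in>A ` {..<M} - {{}}. \<mu> X)"
    by (rule sum.mono_neutral_right) (auto simp: assms(1))
  also have "\<dots> = \<mu> (\<Union>(A ` {..<M} - {{}}))"
  proof (rule fin_additive[symmetric, OF assms(1) loc])
    show "finite (A ` {..<M} - {{}})" by simp
    show "A ` {..<M} - {{}} \<subseteq> Sinf" using rng by blast
    show "{} \<notin> A ` {..<M} - {{}}" by blast
    show "disjoint (A ` {..<M} - {{}})"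
    proof (rule pairwiseI)
      fix X Y assume XY: "X \<in> A ` {..<M} - {{}}" "Y \<in> A ` {..<M} - {{}}" "X \<noteq> Y"
      then obtain i j where ij: "X = A i" "Y = A j" by blast
      then have "i \<noteq> j" using XY(3) by blast
      then have "A i \<inter> A j = {}" using dj unfolding disjoint_family_on_def by blast
      then show "disjnt X Y" using ij unfolding disjnt_def by simp
    qed
    have "\<Union>(A ` {..<M} - {{}}) = (\<Union>i. A i)" by (rule UnEq)
    then show "\<Union>(A ` {..<M} - {{}}) \<in> Sinf" using un by simp
  qed
  also have "\<Union>(A ` {..<M} - {{}}) = (\<Union>i. A i)" by (rule UnEq)
  finally show "(\<Sum>i. \<mu> (A i)) = \<mu> (\<Union>i. A i)" .
qed

theorem mainTheorem11:
  fixes \<mu> :: "('a::finite) infword set \<Rightarrow> ennreal"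
  assumes "\<mu> {} = 0"
  shows "countably_additive Sinf \<mu> \<longleftrightarrow>
    (\<forall>u. \<mu> (Cinf u) = \<mu> {Fin u} + (\<Sum>a\<in>UNIV. \<mu> (Cinf (u @ [a]))))"
proof
  assume "countably_additive Sinf \<mu>"
  then show "\<forall>u. \<mu> (Cinf u) = \<mu> {Fin u} + (\<Sum>a\<in>UNIV. \<mu> (Cinf (u @ [a])))"
    by (rule forward_dir[of \<mu>, OF assms])
next
  assume "\<forall>u. \<mu> (Cinf u) = \<mu> {Fin u} + (\<Sum>a\<in>UNIV. \<mu> (Cinf (u @ [a])))"
  then show "countably_additive Sinf \<mu>" by (rule backward_dir[of \<mu>, OF assms])
qed

end
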